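(* For all $a,b>0$ and $0\le v\le 1$, with $\mu:=\min\{1-v,v\}$, $$G(a,b)\le Hz_v(a,b)\le \left\{1+\frac{\mu^2}{2}\left(\log a-\log b\right)^2\right\}Hz_v(a,b)\le A(a,b).$$
   Context: For $a,b>0$: $A(a,b):=\frac{a+b}{2}$, $G(a,b):=\sqrt{ab}$, and for $0\le v\le 1$ the Heinz mean is $Hz_v(a,b):=\frac{a^{1-v}b^v+a^{v}b^{1-v}}{2}$. *)

theory Defs
  imports Complex_Main
begin

definition AM :: "real \<Rightarrow> real \<Rightarrow> real" where
  "AM a b = (a + b) / 2"

definition GM :: "real \<Rightarrow> real \<Rightarrow> real" where
  "GM a b = sqrt (a * b)"

definition Hz :: "real \<Rightarrow> real \<Rightarrow> real \<Rightarrow> real" where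
  "Hz v a b = (a powr (1 - v) * b powr v + a powr v * b powr (1 - v)) / 2"

end

theory Submission
  imports Defs
begin

lemma cosh_ge_quad: "1 + x\<^sup>2 / 2 \<le> cosh (x::real)"
proof -
  have c: "cosh x = 1 + 2 * (sinh (x/2))\<^sup>2"
    using cosh_double[of "x/2"] cosh_square_eq[of "x/2"] by simp
  have "\<bar>x/2\<bar> \<le> \<bar>sinh (x/2)\<bar>"
    using real_le_abs_sinh[of "x/2"] by (simp add: sinh_field_def exp_minus)
  hence "(x/2)\<^sup>2 \<le> (sinh (x/2))\<^sup>2"
    by (metis abs_le_square_iff)
  thus ?thesis using c by (simp add: power_divide)
qed

lemma sinh_prod_nonneg:
  fixes d p q :: real
  assumes "0 \<le> p" "0 \<le> q"
  shows "0 \<le> sinh (p*d) * sinh (q*d)"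
proof (cases "d \<ge> 0")
  case True
  then show ?thesis using assms by simp
next
  case False
  then have "sinh (p*d) \<le> 0" "sinh (q*d) \<le> 0" using assms
    by (simp_all add: mult_nonneg_nonpos)
  then show ?thesis by (simp add: mult_nonpos_nonpos)
qed

lemma key:
  fixes d v :: real
  assumes "0 \<le> v" "v \<le> 1"
  shows "(1 + (min (1 - v) v)\<^sup>2 / 2 * (2*d)\<^sup>2) * cosh ((1-2*v)*d) \<le> cosh d"
proof -
  define p where "p = \<bar>1 - 2*v\<bar>"
  define q where "q = 2 * min (1 - v) v"
  have pq: "p + q = 1" "0 \<le> p" "0 \<le> q" using assms unfolding p_def q_def by (auto simp: abs_if min_def)
  have cu: "cosh ((1-2*v)*d) = cosh (p*d)"
  proof (cases "1 - 2*v \<ge> 0")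
    case True then show ?thesis by (simp add: p_def)
  next
    case False
    then have "(1-2*v)*d = - (p*d)" by (simp add: p_def algebra_simps)
    then show ?thesis by simp
  qed
  have m: "(min (1 - v) v)\<^sup>2 / 2 * (2*d)\<^sup>2 = (q*d)\<^sup>2 / 2"
    by (simp add: q_def power2_eq_square)
  have e: "cosh d = cosh (p*d) * cosh (q*d) + sinh (p*d) * sinh (q*d)"
    using cosh_add[of "p*d" "q*d"] pq(1) by (simp add: distrib_right[symmetric])
  have "cosh (p*d) * (1 + (q*d)\<^sup>2/2) \<le> cosh (p*d) * cosh (q*d)"
    using cosh_ge_quad[of "q*d"] by (simp add: mult_left_mono)
  also have "\<dots> \<le> cosh d"
    using sinh_prod_nonneg[OF pq(2,3)] e by simp
  finally have "cosh (p*d) * (1 + (q*d)\<^sup>2/2) \<le> cosh d" .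
  then show ?thesis unfolding cu m by (simp only: mult.commute)
qed

theorem corollary2p4:
  fixes a b v :: real
  assumes "a > 0" and "b > 0" and "0 \<le> v" and "v \<le> 1"
  defines "\<mu> \<equiv> min (1 - v) v"
  shows "GM a b \<le> Hz v a b
    \<and> Hz v a b \<le> (1 + \<mu>\<^sup>2 / 2 * (ln a - ln b)\<^sup>2) * Hz v a b
    \<and> (1 + \<mu>\<^sup>2 / 2 * (ln a - ln b)\<^sup>2) * Hz v a b \<le> AM a b"
proof -
  define x where "x = ln a"
  define y where "y = ln b"
  define m where "m = (x + y) / 2"
  define d where "d = (x - y) / 2"
  have "m + d = x" by (simp add: m_def d_def field_simps)
  hence a: "a = exp (m + d)" using assms(1) by (simp add: x_def)
  have "m - d = y" by (simp add: m_def d_def field_simps)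
  hence b: "b = exp (m - d)" using assms(2) by (simp add: y_def)
  have lnab: "ln a - ln b = 2 * d" by (simp add: x_def[symmetric] y_def[symmetric] d_def)
  have GM: "GM a b = exp m"
  proof -
    have "a * b = exp m * exp m" by (simp add: a b exp_add[symmetric])
    thus ?thesis by (simp add: GM_def)
  qed
  have AM: "AM a b = exp m * cosh d"
    by (simp add: AM_def a b cosh_field_def exp_add exp_diff exp_minus field_simps)
  have Hz: "Hz v a b = exp m * cosh ((1-2*v)*d)"
  proof -
    have "a powr (1 - v) * b powr v = exp (m + (1-2*v)*d)"
      by (simp add: a b powr_def exp_add[symmetric] algebra_simps)
    moreover have "a powr v * b powr (1 - v) = exp (m - (1-2*v)*d)"
      by (simp add: a b powr_def exp_add[symmetric] algebra_simps)
    ultimately show ?thesis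
      by (simp add: Hz_def cosh_field_def exp_add exp_diff exp_minus field_simps)
  qed
  have c1: "1 \<le> cosh ((1-2*v)*d)" by (rule cosh_real_ge_1)
  have k: "(1 + \<mu>\<^sup>2 / 2 * (ln a - ln b)\<^sup>2) * cosh ((1-2*v)*d) \<le> cosh d"
    using key[OF assms(3,4), of d] by (simp add: lnab \<mu>_def)
  have s1: "GM a b \<le> Hz v a b" using c1 by (simp add: GM Hz)
  have hpos: "0 \<le> Hz v a b" by (simp add: Hz)
  have s2: "Hz v a b \<le> (1 + \<mu>\<^sup>2 / 2 * (ln a - ln b)\<^sup>2) * Hz v a b"
    using hpos by (simp add: mult_le_cancel_right1 mult_nonneg_nonneg)
  have s3: "(1 + \<mu>\<^sup>2 / 2 * (ln a - ln b)\<^sup>2) * Hz v a b \<le> AM a b"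
    using mult_left_mono[OF k, of "exp m"] by (simp add: Hz AM mult.left_commute)
  show ?thesis using s1 s2 s3 by blast
qed

end
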